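(* Let $(D,S,t_{\max})$ and $(D',S',t'_{\max})$ both satisfy the standing assumptions below with the same (known) initial moment $t_{\min}$, and let $w^\infty$, $w'^\infty$ be their far-field patterns. Fix $\hat x\in\mathbb S^2$ and $0\le k_{\min}<k_{\max}$. If $w^\infty(\hat x,k)=w'^\infty(\hat x,k)$ and $w^\infty(-\hat x,k)=w'^\infty(-\hat x,k)$ for all $k\in(k_{\min},k_{\max})$, then $K_D^{(\hat x)}=K_{D'}^{(\hat x)}$ and $t_{\max}=t'_{\max}$.
   Context: Standing assumptions on a triple $(D,S,t_{\max})$: $D\subset\mathbb R^3$ is a bounded Lipschitz domain (open, connected) with $\mathbb R^3\setminus\overline D$ connected; $0\le t_{\min}<t_{\max}$; $S\in C([t_{\min},t_{\max}];L^\infty(D))$ is real-valued with $S\ge c_0>0$ a.e. on $D\times[t_{\min},t_{\max}]$ for some $c_0>0$. The far-field pattern is $w^\infty(\hat x,k)=\frac{1}{\sqrt{2\pi}}\int_{t_{\min}}^{t_{\max}}\int_D e^{{\rm i}k(t-\hat x\cdot y)}S(y,t)\,dy\,dt$ for $\hat x\in\mathbb S^2$, $k\in\mathbb R$. With $\hat x\cdot D=\{\hat x\cdot y:y\in D\}$, $K_D^{(\hat x)}=\{y\in\mathbb R^3:\inf(\hat x\cdot D)<\hat x\cdot y<\sup(\hat x\cdot D)\}$. *)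

theory Defs
  imports "HOL-Analysis.Analysis"
begin

definition lipschitz_domain :: "(real^3) set \<Rightarrow> bool" where
  "lipschitz_domain D \<longleftrightarrow> open D \<and> connected D \<and> bounded D \<and> D \<noteq> {} \<and>
     (\<forall>p \<in> frontier D. \<exists>r>0. \<exists>Q g L.
        orthogonal_transformation (Q :: real^3 \<Rightarrow> real^3) \<and> lipschitz_on L UNIV (g :: real^2 \<Rightarrow> real) \<and>
        (\<forall>x \<in> ball p r. x \<in> D \<longleftrightarrow>
            (Q (x - p)) $ 3 > g (vector [(Q (x - p)) $ 1, (Q (x - p)) $ 2])))"

text \<open>S in C([tmin,tmax]; L^infty(D)), represented by a jointly measurable function
S y t, real valued, with S >= c0 > 0 a.e. on D x [tmin,tmax].\<close>
definition standing_assumptions ::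
  "(real^3) set \<Rightarrow> (real^3 \<Rightarrow> real \<Rightarrow> real) \<Rightarrow> real \<Rightarrow> real \<Rightarrow> bool" where
  "standing_assumptions D S tmin tmax \<longleftrightarrow>
     lipschitz_domain D \<and> connected (- closure D) \<and>
     0 \<le> tmin \<and> tmin < tmax \<and>
     (\<lambda>z. S (fst z) (snd z)) \<in> borel_measurable (lebesgue_on (D \<times> {tmin..tmax})) \<and>
     (\<forall>t \<in> {tmin..tmax}. (\<lambda>y. S y t) \<in> borel_measurable (lebesgue_on D) \<and>
        (\<exists>B. AE y in lebesgue_on D. \<bar>S y t\<bar> \<le> B)) \<and>
     (\<forall>t \<in> {tmin..tmax}. \<forall>e>0. \<exists>\<delta>>0. \<forall>s \<in> {tmin..tmax}. \<bar>s - t\<bar> < \<delta> \<longrightarrow>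
        (AE y in lebesgue_on D. \<bar>S y s - S y t\<bar> \<le> e)) \<and>
     (\<exists>c0>0. AE z in lebesgue_on (D \<times> {tmin..tmax}). S (fst z) (snd z) \<ge> c0)"

definition far_field ::
  "(real^3) set \<Rightarrow> (real^3 \<Rightarrow> real \<Rightarrow> real) \<Rightarrow> real \<Rightarrow> real \<Rightarrow> real^3 \<Rightarrow> real \<Rightarrow> complex" where
  "far_field D S tmin tmax xh k =
     complex_of_real (1 / sqrt (2 * pi)) *
     (LINT z : D \<times> {tmin..tmax} | lebesgue.
        exp (\<i> * complex_of_real (k * (snd z - xh \<bullet> fst z))) * complex_of_real (S (fst z) (snd z)))"

definition K_strip :: "(real^3) set \<Rightarrow> real^3 \<Rightarrow> (real^3) set" where
  "K_strip D xh = {y. Inf ((\<lambda>y. xh \<bullet> y) ` D) < xh \<bullet> y \<and> xh \<bullet> y < Sup ((\<lambda>y. xh \<bullet> y) ` D)}"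

end

theory Submission
  imports Defs "HOL-Complex_Analysis.Complex_Analysis"
begin

lemma unif_bound:
  assumes "standing_assumptions D S tmin tmax"
  shows "\<exists>M\<ge>0. \<forall>t\<in>{tmin..tmax}. AE y in lebesgue_on D. \<bar>S y t\<bar> \<le> M"
proof -
  let ?I = "{tmin..tmax}"
  have bd: "\<forall>t\<in>?I. \<exists>B. AE y in lebesgue_on D. \<bar>S y t\<bar> \<le> B"
   and ct: "\<forall>t\<in>?I. \<forall>e>0. \<exists>\<delta>>0. \<forall>s\<in>?I. \<bar>s - t\<bar> < \<delta> \<longrightarrow> (AE y in lebesgue_on D. \<bar>S y s - S y t\<bar> \<le> e)"
    using assms unfolding standing_assumptions_def by auto
  have "\<forall>t\<in>?I. \<exists>dB. fst dB > 0 \<and> (\<forall>s\<in>?I. \<bar>s - t\<bar> < fst dB \<longrightarrow> (AE y in lebesgue_on D. \<bar>S y s\<bar> \<le> snd dB))"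
  proof
    fix t assume t: "t \<in> ?I"
    obtain B where B: "AE y in lebesgue_on D. \<bar>S y t\<bar> \<le> B" using bd t by blast
    obtain d where d: "d > 0" "\<forall>s\<in>?I. \<bar>s - t\<bar> < d \<longrightarrow> (AE y in lebesgue_on D. \<bar>S y s - S y t\<bar> \<le> 1)"
      using ct t by (meson zero_less_one)
    have "\<forall>s\<in>?I. \<bar>s - t\<bar> < d \<longrightarrow> (AE y in lebesgue_on D. \<bar>S y s\<bar> \<le> B + 1)"
    proof (intro ballI impI)
      fix s assume "s \<in> ?I" "\<bar>s - t\<bar> < d"
      with d have "AE y in lebesgue_on D. \<bar>S y s - S y t\<bar> \<le> 1" by blast
      with B show "AE y in lebesgue_on D. \<bar>S y s\<bar> \<le> B + 1"
        by eventually_elim auto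
    qed
    then show "\<exists>dB. fst dB > 0 \<and> (\<forall>s\<in>?I. \<bar>s - t\<bar> < fst dB \<longrightarrow> (AE y in lebesgue_on D. \<bar>S y s\<bar> \<le> snd dB))"
      using d(1) by (intro exI[of _ "(d, B + 1)"]) auto
  qed
  then obtain dB where dB: "\<And>t. t \<in> ?I \<Longrightarrow> fst (dB t) > 0 \<and> (\<forall>s\<in>?I. \<bar>s - t\<bar> < fst (dB t) \<longrightarrow> (AE y in lebesgue_on D. \<bar>S y s\<bar> \<le> snd (dB t)))"
    by metis
  have "?I \<subseteq> (\<Union>t\<in>?I. ball t (fst (dB t)))"
    using dB by force
  then obtain K where K: "K \<subseteq> ?I" "finite K" "?I \<subseteq> (\<Union>t\<in>K. ball t (fst (dB t)))"
    by (metis (no_types, lifting) compactE_image[OF compact_Icc, of ?I "\<lambda>t. ball t (fst (dB t))"] open_ball)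
  define M where "M = (\<Sum>t\<in>K. \<bar>snd (dB t)\<bar>)"
  have "M \<ge> 0" unfolding M_def by (simp add: sum_nonneg)
  moreover have "\<forall>s\<in>?I. AE y in lebesgue_on D. \<bar>S y s\<bar> \<le> M"
  proof
    fix s assume s: "s \<in> ?I"
    then obtain t where t: "t \<in> K" "s \<in> ball t (fst (dB t))" using K by blast
    then have "AE y in lebesgue_on D. \<bar>S y s\<bar> \<le> snd (dB t)"
      using dB[of t] K s by (auto simp: dist_real_def)
    moreover have "snd (dB t) \<le> M"
      unfolding M_def using t K(2)
      by (meson abs_ge_self order_trans member_le_sum abs_ge_zero)
    ultimately show "AE y in lebesgue_on D. \<bar>S y s\<bar> \<le> M"
      by (auto elim: eventually_mono)
  qed
  ultimately show ?thesis by blast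
qed

lemma Omega_sets:
  fixes D :: "(real^3) set"
  assumes "open D"
  shows "D \<times> {a..b::real} \<in> sets (lborel :: ((real^3) \<times> real) measure)"
proof -
  have "D \<times> {a..b} \<in> sets (lborel \<Otimes>\<^sub>M (lborel :: real measure))"
    using assms by (intro pair_measureI) auto
  then show ?thesis by (simp only: lborel_prod)
qed

lemma S_integrable:
  fixes D :: "(real^3) set" and S :: "real^3 \<Rightarrow> real \<Rightarrow> real"
  assumes sa: "standing_assumptions D S tmin tmax"
  shows "integrable (lebesgue_on (D \<times> {tmin..tmax})) (\<lambda>z. S (fst z) (snd z))"
proof -
  let ?I = "{tmin..tmax}"
  let ?O = "D \<times> ?I"
  have oD: "open D" "bounded D" using sa unfolding standing_assumptions_def lipschitz_domain_def by auto
  have Osets: "?O \<in> sets lborel" using Omega_sets[OF oD(1)] .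
  then have Oleb: "?O \<in> sets lebesgue" by (rule sets_completionI_sets)
  have Dleb: "D \<in> sets lebesgue" using oD(1) by auto
  have meas: "(\<lambda>z. S (fst z) (snd z)) \<in> borel_measurable (lebesgue_on ?O)"
    using sa unfolding standing_assumptions_def by auto
  define f where "f = (\<lambda>z::(real^3)\<times>real. indicator ?O z *\<^sub>R S (fst z) (snd z))"
  have fm: "f \<in> borel_measurable lebesgue"
    using meas Oleb unfolding f_def by (subst (asm) borel_measurable_restrict_space_iff) auto
  obtain g where gm: "g \<in> borel_measurable lborel" and fg: "AE x in lborel. f x = g x"
    using completion_ex_borel_measurable_real[OF fm] by blast
  obtain M where M: "M \<ge> 0" "\<forall>t\<in>?I. AE y in lebesgue_on D. \<bar>S y t\<bar> \<le> M"
    using unif_bound[OF sa] by blast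
  obtain N where N: "{x \<in> space lborel. \<not> f x = g x} \<subseteq> N" "emeasure lborel N = 0" "N \<in> sets lborel"
    using fg by (rule AE_E)
  have Nprod: "N \<in> sets (lborel \<Otimes>\<^sub>M (lborel :: real measure))" "emeasure (lborel \<Otimes>\<^sub>M (lborel :: real measure)) N = 0"
    using N by (simp_all only: lborel_prod)
  have "AE z in lborel \<Otimes>\<^sub>M (lborel :: real measure). z \<notin> N"
    using Nprod by (intro AE_not_in) auto
  then have aen: "AE y in lborel. AE t in lborel. (y, t) \<notin> N"
    by (rule lborel_pair.AE_pair)
  have mN: "{x \<in> space (lborel \<Otimes>\<^sub>M (lborel :: real measure)). (\<lambda>a b. (a, b) \<notin> N) (fst x) (snd x)} \<in> sets (lborel \<Otimes>\<^sub>M lborel)"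
  proof -
    have "space (lborel \<Otimes>\<^sub>M (lborel :: real measure)) - N \<in> sets (lborel \<Otimes>\<^sub>M lborel)"
      using Nprod(1) by (rule sets.compl_sets)
    moreover have "{x \<in> space (lborel \<Otimes>\<^sub>M (lborel :: real measure)). (\<lambda>a b. (a, b) \<notin> N) (fst x) (snd x)} = space (lborel \<Otimes>\<^sub>M (lborel :: real measure)) - N"
      by auto
    ultimately show ?thesis by simp
  qed
  have AN: "AE t in lborel. AE y in lborel. (y, t) \<notin> N"
    using lborel_pair.AE_commute[of "\<lambda>a b. (a, b) \<notin> N"] mN aen by simp
  have gprod: "g \<in> borel_measurable (lborel \<Otimes>\<^sub>M (lborel :: real measure))"
    using gm by (simp only: lborel_prod)
  have "AE t in lborel. AE y in lborel. \<bar>g (y, t)\<bar> \<le> M"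
    using AN
  proof eventually_elim
    case (elim t)
    show ?case
    proof (cases "t \<in> ?I")
      case True
      then have "AE y in lebesgue_on D. \<bar>S y t\<bar> \<le> M" using M by blast
      then have "AE y in lebesgue. y \<in> D \<longrightarrow> \<bar>S y t\<bar> \<le> M"
        using Dleb by (subst (asm) AE_restrict_space_iff) auto
      then have "AE y in lborel. y \<in> D \<longrightarrow> \<bar>S y t\<bar> \<le> M"
        by (simp add: AE_completion_iff)
      with elim show ?thesis
      proof eventually_elim
        case (elim y)
        have "g (y, t) = f (y, t)" using elim(1) N(1) by force
        then show ?case using elim M(1) True by (auto simp: f_def indicator_def)
      qed
    next
      case False
      from elim show ?thesis
      proof eventually_elim
        case (elim y)
        have "g (y, t) = f (y, t)" using elim(1) N(1) by force
        then show ?case using M(1) False by (auto simp: f_def indicator_def)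
      qed
    qed
  qed
  then have "AE y in lborel. AE t in lborel. \<bar>g (y, t)\<bar> \<le> M"
  proof -
    have mg: "{x \<in> space (lborel \<Otimes>\<^sub>M (lborel :: real measure)). \<bar>g x\<bar> \<le> M} \<in> sets (lborel \<Otimes>\<^sub>M lborel)"
      using gprod by measurable
    then show ?thesis
      using lborel_pair.AE_commute[of "\<lambda>a b. \<bar>g (a, b)\<bar> \<le> M"] \<open>AE t in lborel. AE y in lborel. \<bar>g (y, t)\<bar> \<le> M\<close> by simp
  qed
  then have "AE z in lborel \<Otimes>\<^sub>M (lborel :: real measure). \<bar>g z\<bar> \<le> M"
    using gprod by (intro lborel_pair.AE_pair_measure) (measurable, auto)
  then have "AE z in lborel. \<bar>g z\<bar> \<le> M" by (simp only: lborel_prod)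
  with fg have "AE z in lborel. norm (f z) \<le> norm (M * indicator ?O z)"
  proof eventually_elim
    case (elim z)
    then show ?case by (cases "z \<in> ?O") (auto simp: f_def indicator_def M(1))
  qed
  then have bnd: "AE z in lebesgue. norm (f z) \<le> norm (M * indicator ?O z)"
    by (simp add: AE_completion_iff)
  have "emeasure lborel ?O < \<infinity>"
    using oD(2) by (intro emeasure_bounded_finite bounded_Times) auto
  then have "emeasure lebesgue ?O < \<infinity>" using Osets by (simp add: emeasure_completion)
  then have "integrable lebesgue (\<lambda>z. M * indicator ?O z)"
    using Oleb by (intro integrable_mult_right integrable_real_indicator) auto
  then have "integrable lebesgue f"
    using fm bnd by (rule Bochner_Integration.integrable_bound)
  then show ?thesis
    using Oleb unfolding f_def by (subst integrable_restrict_space) auto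
qed


lemma powser_integral:
  fixes M :: "'a measure" and \<phi> S :: "'a \<Rightarrow> real" and z :: complex
  assumes int: "integrable M S" and \<phi>m: "\<phi> \<in> borel_measurable M" and bd: "\<And>x. x \<in> space M \<Longrightarrow> \<bar>\<phi> x\<bar> \<le> R"
  defines "a \<equiv> \<lambda>n. (LINT x|M. (\<i> * complex_of_real (\<phi> x)) ^ n / fact n * complex_of_real (S x))"
  shows "(\<lambda>n. a n * z ^ n) sums (LINT x|M. exp (\<i> * z * complex_of_real (\<phi> x)) * complex_of_real (S x))"
proof -
  have R0: "R \<ge> 0" if "x \<in> space M" for x using bd[OF that] by linarith
  define f where "f = (\<lambda>n x. (\<i> * complex_of_real (\<phi> x)) ^ n / fact n * complex_of_real (S x) * z ^ n)"
  have fn_bound: "norm (f n x) \<le> (norm z * R) ^ n / fact n * \<bar>S x\<bar>" if x: "x \<in> space M" for n x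
  proof -
    have "norm (f n x) = (norm z * \<bar>\<phi> x\<bar>) ^ n / fact n * \<bar>S x\<bar>"
      unfolding f_def by (simp add: norm_mult norm_divide norm_power power_mult_distrib)
    also have "\<dots> \<le> (norm z * R) ^ n / fact n * \<bar>S x\<bar>"
      using bd[OF x] by (intro mult_right_mono divide_right_mono power_mono mult_left_mono) auto
    finally show ?thesis .
  qed
  have fint: "integrable M (f n)" for n
  proof (rule Bochner_Integration.integrable_bound)
    show "integrable M (\<lambda>x. (norm z * R) ^ n / fact n * \<bar>S x\<bar>)"
      using int by (intro integrable_mult_right integrable_abs)
    show "f n \<in> borel_measurable M"
      using \<phi>m int unfolding f_def by measurable
    show "AE x in M. norm (f n x) \<le> norm ((norm z * R) ^ n / fact n * \<bar>S x\<bar>)"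
      by (intro AE_I2) (use fn_bound R0 in \<open>auto simp: abs_mult\<close>)
  qed
  have sumx: "(\<lambda>n. f n x) sums (exp (\<i> * z * complex_of_real (\<phi> x)) * complex_of_real (S x))" for x
  proof -
    have "(\<lambda>n. (\<i> * z * complex_of_real (\<phi> x)) ^ n /\<^sub>R fact n * complex_of_real (S x)) sums (exp (\<i> * z * complex_of_real (\<phi> x)) * complex_of_real (S x))"
      by (intro sums_mult2 exp_converges)
    moreover have "(\<i> * z * complex_of_real (\<phi> x)) ^ n /\<^sub>R fact n * complex_of_real (S x) = f n x" for n
      unfolding f_def by (simp add: scaleR_conv_of_real power_mult_distrib field_simps)
    ultimately show ?thesis by simp
  qed
  have "summable (\<lambda>n. (norm z * R) ^ n / fact n)"
    using summable_exp[of "norm z * R"] by (simp add: field_simps)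
  note sm = this
  have "(\<lambda>n. integral\<^sup>L M (f n)) sums (\<integral>x. (\<Sum>n. f n x) \<partial>M)"
  proof (rule sums_integral)
    show "integrable M (f i)" for i by (rule fint)
    show "AE x in M. summable (\<lambda>i. norm (f i x))"
    proof (intro AE_I2 impI)
      fix x assume x: "x \<in> space M"
      show "summable (\<lambda>i. norm (f i x))"
        by (rule summable_comparison_test'[OF summable_mult2[OF sm, of "\<bar>S x\<bar>"], where N=0])
          (use fn_bound[OF x] in auto)
    qed
    show "summable (\<lambda>i. \<integral>x. norm (f i x) \<partial>M)"
    proof (rule summable_comparison_test[OF _ summable_mult2[OF sm, of "\<integral>x. \<bar>S x\<bar> \<partial>M"]])
      show "\<exists>N. \<forall>n\<ge>N. norm (\<integral>x. norm (f n x) \<partial>M) \<le> (norm z * R) ^ n / fact n * (\<integral>x. \<bar>S x\<bar> \<partial>M)"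
      proof (intro exI allI impI)
        fix n :: nat
        have "(\<integral>x. norm (f n x) \<partial>M) \<le> (\<integral>x. (norm z * R) ^ n / fact n * \<bar>S x\<bar> \<partial>M)"
          using fint int fn_bound by (intro integral_mono) auto
        then show "norm (\<integral>x. norm (f n x) \<partial>M) \<le> (norm z * R) ^ n / fact n * (\<integral>x. \<bar>S x\<bar> \<partial>M)"
          by simp
      qed
    qed
  qed
  moreover have "integral\<^sup>L M (f n) = a n * z ^ n" for n
    unfolding f_def a_def by (rule integral_mult_left_zero)
  moreover have "(\<Sum>n. f n x) = exp (\<i> * z * complex_of_real (\<phi> x)) * complex_of_real (S x)" for x
    using sumx by (rule sums_unique[symmetric])
  ultimately show ?thesis by simp
qed

lemma entire_powser:
  fixes a :: "nat \<Rightarrow> complex"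
  assumes "\<And>z. (\<lambda>n. a n * z ^ n) sums G z"
  shows "G holomorphic_on UNIV"
proof -
  have cr: "conv_radius a = \<infinity>"
  proof (rule conv_radius_inftyI'[where c=0])
    fix r :: real assume r: "r > 0"
    have "summable (\<lambda>n. a n * complex_of_real r ^ n)"
      using assms[of "complex_of_real r"] by (simp add: sums_iff)
    then show "\<exists>z. norm z = r \<and> summable (\<lambda>n. a n * z ^ n)"
      using r by (intro exI[of _ "complex_of_real r"]) auto
  qed
  have G: "G = (\<lambda>z. \<Sum>n. a n * z ^ n)"
    using assms by (auto simp: sums_iff)
  show ?thesis unfolding G holomorphic_on_def field_differentiable_def
  proof
    fix x :: complex
    have "((\<lambda>z. \<Sum>n. a n * z ^ n) has_field_derivative (\<Sum>n. diffs a n * x ^ n)) (at x within UNIV)"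
      by (rule has_field_derivative_powser) (simp add: cr)
    then show "\<exists>f'. ((\<lambda>z. \<Sum>n. a n * z ^ n) has_field_derivative f') (at x within UNIV)" by blast
  qed
qed

lemma identity_real_interval:
  fixes G H :: "complex \<Rightarrow> complex"
  assumes "G holomorphic_on UNIV" "H holomorphic_on UNIV" "kmin < kmax"
    and eq: "\<And>k. k \<in> {kmin<..<kmax} \<Longrightarrow> G (of_real k) = H (of_real k)"
  shows "G w = H w"
proof -
  define m where "m = (kmin + kmax) / 2"
  have lim: "complex_of_real m islimpt (complex_of_real ` {kmin<..<kmax})"
    unfolding islimpt_approachable
  proof (intro allI impI)
    fix e :: real assume e: "e > 0"
    define d where "d = min (e/2) ((kmax - kmin)/4)"
    have d: "d > 0" "d < e" "d < (kmax - kmin)/2" using e assms(3) unfolding d_def min_def by auto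
    show "\<exists>x'\<in>complex_of_real ` {kmin<..<kmax}. x' \<noteq> complex_of_real m \<and> dist x' (complex_of_real m) < e"
    proof (intro bexI[of _ "complex_of_real (m + d)"] conjI)
      have "m + d \<in> {kmin<..<kmax}" using d assms(3) by (auto simp: m_def field_simps)
      then show "complex_of_real (m + d) \<in> complex_of_real ` {kmin<..<kmax}" by blast
      show "complex_of_real (m + d) \<noteq> complex_of_real m" using d by (simp only: of_real_eq_iff)
      have "dist (complex_of_real (m + d)) (complex_of_real m) = dist (m + d) m" by (rule dist_of_real)
      then show "dist (complex_of_real (m + d)) (complex_of_real m) < e" using d by (simp add: dist_real_def)
    qed
  qed
  have "G w - H w = 0"
  proof (rule analytic_continuation[where f="\<lambda>z. G z - H z" and S=UNIV and U="complex_of_real ` {kmin<..<kmax}"])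
    show "(\<lambda>z. G z - H z) holomorphic_on UNIV" using assms by (intro holomorphic_intros)
  qed (use lim eq in auto)
  then show ?thesis by simp
qed


lemma phi_meas:
  fixes v :: "real^3" and \<Omega> :: "((real^3) \<times> real) set"
  shows "(\<lambda>z. snd z - v \<bullet> fst z) \<in> borel_measurable (lebesgue_on \<Omega>)"
proof -
  have "(\<lambda>z::(real^3)\<times>real. snd z - v \<bullet> fst z) \<in> borel_measurable borel"
    by (intro borel_measurable_continuous_onI continuous_intros)
  then have "(\<lambda>z::(real^3)\<times>real. snd z - v \<bullet> fst z) \<in> borel_measurable lebesgue"
    by (simp add: measurable_completion measurable_lborel1)
  then show ?thesis by (rule measurable_restrict_space1)
qed

lemma phi_bound:
  fixes v :: "real^3" and D :: "(real^3) set"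
  assumes "bounded D"
  shows "\<exists>R. \<forall>z \<in> D \<times> {tmin..tmax}. \<bar>snd z - v \<bullet> fst z\<bar> \<le> R"
proof -
  obtain K where K: "\<And>y. y \<in> D \<Longrightarrow> norm y \<le> K" using assms bounded_iff by metis
  have "\<bar>snd z - v \<bullet> fst z\<bar> \<le> \<bar>tmin\<bar> + \<bar>tmax\<bar> + norm v * K" if z: "z \<in> D \<times> {tmin..tmax}" for z
  proof -
    have "\<bar>v \<bullet> fst z\<bar> \<le> norm v * norm (fst z)" by (rule Cauchy_Schwarz_ineq2)
    also have "\<dots> \<le> norm v * K" using K z by (intro mult_left_mono) auto
    finally have "\<bar>v \<bullet> fst z\<bar> \<le> norm v * K" .
    moreover have "\<bar>snd z\<bar> \<le> \<bar>tmin\<bar> + \<bar>tmax\<bar>" using z by auto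
    ultimately show ?thesis by linarith
  qed
  then show ?thesis by blast
qed

definition GG :: "(real^3) set \<Rightarrow> (real^3 \<Rightarrow> real \<Rightarrow> real) \<Rightarrow> real \<Rightarrow> real \<Rightarrow> real^3 \<Rightarrow> complex \<Rightarrow> complex" where
  "GG D S tmin tmax v w = (LINT z|lebesgue_on (D \<times> {tmin..tmax}).
      exp (\<i> * w * complex_of_real (snd z - v \<bullet> fst z)) * complex_of_real (S (fst z) (snd z)))"

lemma GG_holo:
  assumes sa: "standing_assumptions D S tmin tmax"
  shows "GG D S tmin tmax v holomorphic_on UNIV"
proof -
  have "bounded D" using sa unfolding standing_assumptions_def lipschitz_domain_def by auto
  then obtain R where R: "\<forall>z \<in> D \<times> {tmin..tmax}. \<bar>snd z - v \<bullet> fst z\<bar> \<le> R"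
    using phi_bound by blast
  show ?thesis
    unfolding GG_def
    by (rule entire_powser, rule powser_integral[OF S_integrable[OF sa] phi_meas, where R=R]) (use R in auto)
qed

lemma GG_far_field:
  assumes sa: "standing_assumptions D S tmin tmax"
  shows "far_field D S tmin tmax v k = complex_of_real (1 / sqrt (2 * pi)) * GG D S tmin tmax v (complex_of_real k)"
proof -
  have "open D" using sa unfolding standing_assumptions_def lipschitz_domain_def by auto
  then have O: "D \<times> {tmin..tmax} \<in> sets lebesgue" by (intro sets_completionI_sets Omega_sets)
  have "set_lebesgue_integral lebesgue (D \<times> {tmin..tmax}) f = integral\<^sup>L (lebesgue_on (D \<times> {tmin..tmax})) f" for f :: "_ \<Rightarrow> complex"
    unfolding set_lebesgue_integral_def by (rule integral_restrict_space[symmetric]) (use O in auto)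
  then show ?thesis
    unfolding far_field_def GG_def by (simp add: mult.assoc)
qed

lemma GG_real:
  "GG D S tmin tmax v (- \<i> * complex_of_real \<tau>) =
     complex_of_real (LINT z|lebesgue_on (D \<times> {tmin..tmax}). exp (\<tau> * (snd z - v \<bullet> fst z)) * S (fst z) (snd z))"
proof -
  have "exp (\<i> * (- \<i> * complex_of_real \<tau>) * complex_of_real x) = complex_of_real (exp (\<tau> * x))" for x
  proof -
    have "\<i> * (- \<i> * complex_of_real \<tau>) * complex_of_real x = complex_of_real (\<tau> * x)" by simp
    then show ?thesis by (simp only: exp_of_real)
  qed
  then have "(\<lambda>z. exp (\<i> * (- \<i> * complex_of_real \<tau>) * complex_of_real (snd z - v \<bullet> fst z)) * complex_of_real (S (fst z) (snd z)))
      = (\<lambda>z. complex_of_real (exp (\<tau> * (snd z - v \<bullet> fst z)) * S (fst z) (snd z)))"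
    by (intro ext) (simp only: of_real_mult)
  then show ?thesis unfolding GG_def
    by (simp only: integral_complex_of_real)
qed

lemma transfer:
  assumes sa: "standing_assumptions D S tmin tmax" and sa': "standing_assumptions D' S' tmin tmax'"
    and k: "kmin < kmax"
    and eq: "\<forall>k \<in> {kmin<..<kmax}. far_field D S tmin tmax v k = far_field D' S' tmin tmax' v k"
  shows "(LINT z|lebesgue_on (D \<times> {tmin..tmax}). exp (\<tau> * (snd z - v \<bullet> fst z)) * S (fst z) (snd z)) =
         (LINT z|lebesgue_on (D' \<times> {tmin..tmax'}). exp (\<tau> * (snd z - v \<bullet> fst z)) * S' (fst z) (snd z))"
proof -
  have c: "complex_of_real (1 / sqrt (2 * pi)) \<noteq> 0" by simp
  have "GG D S tmin tmax v w = GG D' S' tmin tmax' v w" for w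
  proof (rule identity_real_interval[OF GG_holo[OF sa] GG_holo[OF sa'] k])
    fix k assume "k \<in> {kmin<..<kmax}"
    with eq c show "GG D S tmin tmax v (complex_of_real k) = GG D' S' tmin tmax' v (complex_of_real k)"
      unfolding GG_far_field[OF sa] GG_far_field[OF sa'] by auto
  qed
  from this[of "- \<i> * complex_of_real \<tau>"] show ?thesis
    unfolding GG_real by simp
qed


lemma int_exp:
  fixes M :: "'a measure" and \<psi> S :: "'a \<Rightarrow> real"
  assumes int: "integrable M S" and m: "\<psi> \<in> borel_measurable M" and bd: "\<And>x. x \<in> space M \<Longrightarrow> \<bar>\<psi> x\<bar> \<le> R"
  shows "integrable M (\<lambda>x. exp (\<tau> * \<psi> x) * S x)"
proof (rule Bochner_Integration.integrable_bound)
  show "integrable M (\<lambda>x. exp (\<bar>\<tau>\<bar> * R) * \<bar>S x\<bar>)" using int by auto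
  show "(\<lambda>x. exp (\<tau> * \<psi> x) * S x) \<in> borel_measurable M" using m int by measurable
  show "AE x in M. norm (exp (\<tau> * \<psi> x) * S x) \<le> norm (exp (\<bar>\<tau>\<bar> * R) * \<bar>S x\<bar>)"
  proof (intro AE_I2)
    fix x assume x: "x \<in> space M"
    have "\<tau> * \<psi> x \<le> \<bar>\<tau>\<bar> * R"
    proof -
      have "\<tau> * \<psi> x \<le> \<bar>\<tau> * \<psi> x\<bar>" by simp
      also have "\<dots> = \<bar>\<tau>\<bar> * \<bar>\<psi> x\<bar>" by (simp add: abs_mult)
      also have "\<dots> \<le> \<bar>\<tau>\<bar> * R" using bd[OF x] by (intro mult_left_mono) auto
      finally show ?thesis .
    qed
    then show "norm (exp (\<tau> * \<psi> x) * S x) \<le> norm (exp (\<bar>\<tau>\<bar> * R) * \<bar>S x\<bar>)"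
      by (simp add: abs_mult mult_right_mono)
  qed
qed

lemma one_side:
  fixes M :: "'a measure" and \<psi> S :: "'a \<Rightarrow> real" and L' :: "real \<Rightarrow> real"
  assumes int: "integrable M S" and nn: "AE x in M. S x \<ge> 0"
    and m: "\<psi> \<in> borel_measurable M" and bd: "\<And>x. x \<in> space M \<Longrightarrow> \<bar>\<psi> x\<bar> \<le> R"
    and up: "\<And>x. x \<in> space M \<Longrightarrow> \<psi> x \<le> B"
    and low: "\<forall>\<epsilon>>0. \<exists>c>0. \<forall>\<tau>\<ge>0. c * exp (\<tau> * (B' - \<epsilon>)) \<le> L' \<tau>"
    and eq: "\<And>\<tau>. \<tau> \<ge> 0 \<Longrightarrow> (LINT x|M. exp (\<tau> * \<psi> x) * S x) = L' \<tau>"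
  shows "B' \<le> B"
proof (rule ccontr)
  assume "\<not> B' \<le> B"
  define \<epsilon> where "\<epsilon> = (B' - B) / 2"
  have \<epsilon>1: "\<epsilon> > 0" using \<open>\<not> B' \<le> B\<close> unfolding \<epsilon>_def by auto
  have \<epsilon>2: "B' - \<epsilon> = B + \<epsilon>" unfolding \<epsilon>_def by (simp add: field_simps)
  note \<epsilon> = \<epsilon>1 \<epsilon>2
  obtain c where c: "c > 0" "\<And>\<tau>. \<tau> \<ge> 0 \<Longrightarrow> c * exp (\<tau> * (B' - \<epsilon>)) \<le> L' \<tau>"
    using low \<epsilon>(1) by blast
  define C where "C = (LINT x|M. S x)"
  have C0: "C \<ge> 0" unfolding C_def using nn by (rule integral_nonneg_AE)
  have key: "c * exp (\<tau> * \<epsilon>) \<le> C" if \<tau>: "\<tau> \<ge> 0" for \<tau>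
  proof -
    have "(LINT x|M. exp (\<tau> * \<psi> x) * S x) \<le> (LINT x|M. exp (\<tau> * B) * S x)"
    proof (rule integral_mono_AE)
      show "integrable M (\<lambda>x. exp (\<tau> * \<psi> x) * S x)" using int_exp[OF int m bd] .
      show "integrable M (\<lambda>x. exp (\<tau> * B) * S x)" using int by auto
      show "AE x in M. exp (\<tau> * \<psi> x) * S x \<le> exp (\<tau> * B) * S x"
        using nn
      proof (rule AE_mp, intro AE_I2 impI)
        fix x assume "x \<in> space M" "0 \<le> S x"
        then show "exp (\<tau> * \<psi> x) * S x \<le> exp (\<tau> * B) * S x"
          using up \<tau> by (intro mult_right_mono) (auto intro: mult_left_mono)
      qed
    qed
    also have "\<dots> = exp (\<tau> * B) * C" unfolding C_def by simp
    finally have "c * exp (\<tau> * (B' - \<epsilon>)) \<le> exp (\<tau> * B) * C"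
      using c(2)[OF \<tau>] eq[OF \<tau>] by linarith
    then have "exp (\<tau> * B) * (c * exp (\<tau> * \<epsilon>)) \<le> exp (\<tau> * B) * C"
      unfolding \<epsilon>(2) by (simp add: distrib_left exp_add mult_ac)
    then show ?thesis by simp
  qed
  define \<tau> where "\<tau> = (C / c + 1) / \<epsilon>"
  have \<tau>0: "\<tau> \<ge> 0" unfolding \<tau>_def using C0 c(1) \<epsilon>(1) by auto
  have "c * (1 + \<tau> * \<epsilon>) \<le> c * exp (\<tau> * \<epsilon>)"
    using c(1) exp_ge_add_one_self[of "\<tau> * \<epsilon>"] by (intro mult_left_mono) auto
  also have "\<dots> \<le> C" using key[OF \<tau>0] .
  finally have "c * (1 + \<tau> * \<epsilon>) \<le> C" .
  moreover have "c * (1 + \<tau> * \<epsilon>) = 2 * c + C"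
    unfolding \<tau>_def using \<epsilon>(1) c(1) by (simp add: field_simps)
  ultimately show False using c(1) by linarith
qed

lemma open_pos_measure:
  fixes U :: "'a::euclidean_space set"
  assumes "open U" "U \<noteq> {}"
  shows "0 < emeasure lborel U"
proof -
  obtain x where "x \<in> U" using assms by blast
  then obtain a b where ab: "box a b \<subseteq> U" "\<forall>i\<in>Basis. a \<bullet> i < b \<bullet> i"
    using open_contains_box[OF assms(1)] by metis
  have "0 < emeasure lborel (box a b)"
    using ab(2) by (subst emeasure_lborel_box) (auto intro!: prod_pos simp: inner_diff_left less_imp_le)
  also have "\<dots> \<le> emeasure lborel U" using ab(1) assms(1) by (intro emeasure_mono) auto
  finally show ?thesis .
qed

lemma low_bound:
  fixes \<Omega> :: "((real^3) \<times> real) set" and S \<psi> :: "(real^3) \<times> real \<Rightarrow> real"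
  assumes O: "\<Omega> \<in> sets lebesgue" "emeasure lebesgue \<Omega> < \<infinity>"
    and int: "integrable (lebesgue_on \<Omega>) S" and c0: "c0 > 0" "AE x in lebesgue_on \<Omega>. S x \<ge> c0"
    and m: "\<psi> \<in> borel_measurable (lebesgue_on \<Omega>)" and bd: "\<And>x. x \<in> \<Omega> \<Longrightarrow> \<bar>\<psi> x\<bar> \<le> R"
    and opn: "\<And>\<epsilon>. \<epsilon> > 0 \<Longrightarrow> \<exists>U. open U \<and> U \<noteq> {} \<and> U \<subseteq> \<Omega> \<and> (\<forall>z\<in>U. B - \<epsilon> < \<psi> z)"
  shows "\<forall>\<epsilon>>0. \<exists>c>0. \<forall>\<tau>\<ge>0. c * exp (\<tau> * (B - \<epsilon>)) \<le> (LINT x|lebesgue_on \<Omega>. exp (\<tau> * \<psi> x) * S x)"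
proof (intro allI impI)
  fix \<epsilon> :: real assume "\<epsilon> > 0"
  from opn[OF this] obtain U where U: "open U" "U \<noteq> {}" "U \<subseteq> \<Omega>" "\<forall>z\<in>U. B - \<epsilon> < \<psi> z"
    by (elim exE conjE) blast
  have spO: "space (lebesgue_on \<Omega>) = \<Omega>" by simp
  have Uleb: "U \<in> sets lebesgue" using U(1) by auto
  have Usets: "U \<in> sets (lebesgue_on \<Omega>)" using Uleb U(3) O(1) by (auto simp: sets_restrict_space_iff)
  have "0 < emeasure lborel U" using open_pos_measure[OF U(1,2)] .
  then have Upos: "0 < emeasure lebesgue U" using U(1) by (simp add: emeasure_completion)
  have Ufin: "emeasure lebesgue U < \<infinity>" using O(2) emeasure_mono[OF U(3) O(1)] by (meson le_less_trans)
  have mU: "measure (lebesgue_on \<Omega>) U = measure lebesgue U"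
    using U(3) O(1) by (subst measure_restrict_space) auto
  have mUpos: "measure lebesgue U > 0"
    using Upos Ufin by (simp add: measure_def enn2real_positive_iff)
  have Ufin': "emeasure (lebesgue_on \<Omega>) U < \<infinity>"
    using U(3) O(1) Ufin by (subst emeasure_restrict_space) auto
  show "\<exists>c>0. \<forall>\<tau>\<ge>0. c * exp (\<tau> * (B - \<epsilon>)) \<le> (LINT x|lebesgue_on \<Omega>. exp (\<tau> * \<psi> x) * S x)"
  proof (intro exI[of _ "c0 * measure lebesgue U"] conjI allI impI)
    show "0 < c0 * measure lebesgue U" using c0(1) mUpos by simp
    fix \<tau> :: real assume \<tau>: "\<tau> \<ge> 0"
    have "c0 * measure lebesgue U * exp (\<tau> * (B - \<epsilon>)) = (LINT x|lebesgue_on \<Omega>. indicator U x * (c0 * exp (\<tau> * (B - \<epsilon>))))"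
      using Usets Ufin' mU Int_absorb2[OF U(3)] by simp
    also have "\<dots> \<le> (LINT x|lebesgue_on \<Omega>. exp (\<tau> * \<psi> x) * S x)"
    proof (rule integral_mono_AE)
      show "integrable (lebesgue_on \<Omega>) (\<lambda>x. indicator U x * (c0 * exp (\<tau> * (B - \<epsilon>))))"
        using Usets Ufin' by (intro integrable_mult_left integrable_real_indicator)
      show "integrable (lebesgue_on \<Omega>) (\<lambda>x. exp (\<tau> * \<psi> x) * S x)"
        by (rule int_exp[OF int m, where R=R]) (use bd in auto)
      show "AE x in lebesgue_on \<Omega>. indicator U x * (c0 * exp (\<tau> * (B - \<epsilon>))) \<le> exp (\<tau> * \<psi> x) * S x"
        using c0(2)
      proof eventually_elim
        case (elim x)
        show ?case
        proof (cases "x \<in> U")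
          case True
          then have "exp (\<tau> * (B - \<epsilon>)) \<le> exp (\<tau> * \<psi> x)"
            using bspec[OF U(4) True] \<tau> by (auto intro: mult_left_mono)
          then have "c0 * exp (\<tau> * (B - \<epsilon>)) \<le> S x * exp (\<tau> * \<psi> x)"
            using elim c0(1) by (intro mult_mono) auto
          then show ?thesis using True by (simp add: mult.commute)
        next
          case False
          then show ?thesis using elim c0(1) by simp
        qed
      qed
    qed
    finally show "c0 * measure lebesgue U * exp (\<tau> * (B - \<epsilon>)) \<le> (LINT x|lebesgue_on \<Omega>. exp (\<tau> * \<psi> x) * S x)" .
  qed
qed


lemma dom_facts:
  assumes sa: "standing_assumptions D S tmin tmax"
  shows "open D" "bounded D" "D \<noteq> {}" "tmin < tmax"
    "bdd_below ((\<lambda>y. v \<bullet> y) ` D)" "bdd_above ((\<lambda>y. v \<bullet> y) ` D)"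
proof -
  show oD: "open D" "bounded D" "D \<noteq> {}" "tmin < tmax"
    using sa unfolding standing_assumptions_def lipschitz_domain_def by auto
  have "bounded ((\<lambda>y. v \<bullet> y) ` D)"
    using oD(2) by (intro bounded_linear_image bounded_linear_inner_right)
  then show "bdd_below ((\<lambda>y. v \<bullet> y) ` D)" "bdd_above ((\<lambda>y. v \<bullet> y) ` D)"
    by (auto simp: bounded_imp_bdd_below bounded_imp_bdd_above)
qed

lemma geo_plus:
  fixes v :: "real^3"
  assumes sa: "standing_assumptions D S tmin tmax"
  defines "B \<equiv> tmax - Inf ((\<lambda>y. v \<bullet> y) ` D)"
  shows "\<And>z. z \<in> D \<times> {tmin..tmax} \<Longrightarrow> 1 * (snd z - v \<bullet> fst z) \<le> B"
    and "\<And>\<epsilon>. \<epsilon> > 0 \<Longrightarrow> \<exists>U. open U \<and> U \<noteq> {} \<and> U \<subseteq> D \<times> {tmin..tmax} \<and> (\<forall>z\<in>U. B - \<epsilon> < 1 * (snd z - v \<bullet> fst z))"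
proof -
  note f = dom_facts(1-4)[OF sa] dom_facts(5-6)[OF sa, of v]
  let ?a = "Inf ((\<lambda>y. v \<bullet> y) ` D)"
  show "1 * (snd z - v \<bullet> fst z) \<le> B" if z: "z \<in> D \<times> {tmin..tmax}" for z
  proof -
    have "?a \<le> v \<bullet> fst z" using z f(5) by (auto intro: cInf_lower)
    then show ?thesis using z unfolding B_def by auto
  qed
  fix \<epsilon> :: real assume e: "\<epsilon> > 0"
  have "?a < ?a + \<epsilon>/2" using e by simp
  then obtain y0 where y0: "y0 \<in> D" "v \<bullet> y0 < ?a + \<epsilon>/2"
    using cInf_lessD[of "(\<lambda>y. v \<bullet> y) ` D" "?a + \<epsilon>/2"] f(3) \<open>?a < ?a + \<epsilon>/2\<close> by auto
  define t1 where "t1 = max tmin (tmax - \<epsilon>/2)"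
  have t1: "t1 < tmax" "tmin \<le> t1" "tmax - \<epsilon>/2 \<le> t1" using f(4) e unfolding t1_def by auto
  define U where "U = (D \<inter> {y. v \<bullet> y < ?a + \<epsilon>/2}) \<times> {t1<..<tmax}"
  show "\<exists>U. open U \<and> U \<noteq> {} \<and> U \<subseteq> D \<times> {tmin..tmax} \<and> (\<forall>z\<in>U. B - \<epsilon> < 1 * (snd z - v \<bullet> fst z))"
  proof (intro exI[of _ U] conjI)
    show "open U" unfolding U_def using f(1) by (intro open_Times open_Int open_halfspace_lt open_greaterThanLessThan)
    have "(y0, (t1 + tmax)/2) \<in> U" unfolding U_def using y0 t1 by auto
    then show "U \<noteq> {}" by blast
    show "U \<subseteq> D \<times> {tmin..tmax}" unfolding U_def using t1 by auto
    show "\<forall>z\<in>U. B - \<epsilon> < 1 * (snd z - v \<bullet> fst z)"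
      unfolding U_def B_def using t1 by auto
  qed
qed

lemma geo_minus:
  fixes v :: "real^3"
  assumes sa: "standing_assumptions D S tmin tmax"
  defines "B \<equiv> Sup ((\<lambda>y. v \<bullet> y) ` D) - tmin"
  shows "\<And>z. z \<in> D \<times> {tmin..tmax} \<Longrightarrow> -1 * (snd z - v \<bullet> fst z) \<le> B"
    and "\<And>\<epsilon>. \<epsilon> > 0 \<Longrightarrow> \<exists>U. open U \<and> U \<noteq> {} \<and> U \<subseteq> D \<times> {tmin..tmax} \<and> (\<forall>z\<in>U. B - \<epsilon> < -1 * (snd z - v \<bullet> fst z))"
proof -
  note f = dom_facts(1-4)[OF sa] dom_facts(5-6)[OF sa, of v]
  let ?b = "Sup ((\<lambda>y. v \<bullet> y) ` D)"
  show "-1 * (snd z - v \<bullet> fst z) \<le> B" if z: "z \<in> D \<times> {tmin..tmax}" for z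
  proof -
    have "v \<bullet> fst z \<le> ?b" using z f(6) by (auto intro: cSup_upper)
    then show ?thesis using z unfolding B_def by auto
  qed
  fix \<epsilon> :: real assume e: "\<epsilon> > 0"
  have "?b - \<epsilon>/2 < ?b" using e by simp
  then obtain y0 where y0: "y0 \<in> D" "?b - \<epsilon>/2 < v \<bullet> y0"
    using less_cSupD[of "(\<lambda>y. v \<bullet> y) ` D" "?b - \<epsilon>/2"] f(3) \<open>?b - \<epsilon>/2 < ?b\<close> by auto
  define t1 where "t1 = min tmax (tmin + \<epsilon>/2)"
  have t1: "tmin < t1" "t1 \<le> tmax" "t1 \<le> tmin + \<epsilon>/2" using f(4) e unfolding t1_def by auto
  define U where "U = (D \<inter> {y. ?b - \<epsilon>/2 < v \<bullet> y}) \<times> {tmin<..<t1}"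
  show "\<exists>U. open U \<and> U \<noteq> {} \<and> U \<subseteq> D \<times> {tmin..tmax} \<and> (\<forall>z\<in>U. B - \<epsilon> < -1 * (snd z - v \<bullet> fst z))"
  proof (intro exI[of _ U] conjI)
    show "open U" unfolding U_def using f(1) by (intro open_Times open_Int open_halfspace_gt open_greaterThanLessThan)
    have "(y0, (tmin + t1)/2) \<in> U" unfolding U_def using y0 t1 by auto
    then show "U \<noteq> {}" by blast
    show "U \<subseteq> D \<times> {tmin..tmax}" unfolding U_def using t1 by auto
    show "\<forall>z\<in>U. B - \<epsilon> < -1 * (snd z - v \<bullet> fst z)"
      unfolding U_def B_def using t1 by auto
  qed
qed

lemma side_data:
  fixes \<sigma> :: real
  assumes sa: "standing_assumptions D S tmin tmax" and \<sigma>: "\<bar>\<sigma>\<bar> = 1"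
    and up: "\<And>z. z \<in> D \<times> {tmin..tmax} \<Longrightarrow> \<sigma> * (snd z - v \<bullet> fst z) \<le> B"
    and opn: "\<And>\<epsilon>. \<epsilon> > 0 \<Longrightarrow> \<exists>U. open U \<and> U \<noteq> {} \<and> U \<subseteq> D \<times> {tmin..tmax} \<and> (\<forall>z\<in>U. B - \<epsilon> < \<sigma> * (snd z - v \<bullet> fst z))"
  shows "integrable (lebesgue_on (D \<times> {tmin..tmax})) (\<lambda>z. S (fst z) (snd z))"
    and "AE z in lebesgue_on (D \<times> {tmin..tmax}). S (fst z) (snd z) \<ge> 0"
    and "(\<lambda>z. \<sigma> * (snd z - v \<bullet> fst z)) \<in> borel_measurable (lebesgue_on (D \<times> {tmin..tmax}))"
    and "\<exists>R. \<forall>z \<in> D \<times> {tmin..tmax}. \<bar>\<sigma> * (snd z - v \<bullet> fst z)\<bar> \<le> R"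
    and "\<forall>\<epsilon>>0. \<exists>c>0. \<forall>\<tau>\<ge>0. c * exp (\<tau> * (B - \<epsilon>)) \<le>
           (LINT z|lebesgue_on (D \<times> {tmin..tmax}). exp (\<tau> * (\<sigma> * (snd z - v \<bullet> fst z))) * S (fst z) (snd z))"
proof -
  note f = dom_facts(1-4)[OF sa] dom_facts(5-6)[OF sa, of v]
  show int: "integrable (lebesgue_on (D \<times> {tmin..tmax})) (\<lambda>z. S (fst z) (snd z))"
    by (rule S_integrable[OF sa])
  obtain c0 where c0: "c0 > 0" "AE z in lebesgue_on (D \<times> {tmin..tmax}). S (fst z) (snd z) \<ge> c0"
    using sa unfolding standing_assumptions_def by blast
  from c0(2) show "AE z in lebesgue_on (D \<times> {tmin..tmax}). S (fst z) (snd z) \<ge> 0"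
    by eventually_elim (use c0(1) in auto)
  show m: "(\<lambda>z. \<sigma> * (snd z - v \<bullet> fst z)) \<in> borel_measurable (lebesgue_on (D \<times> {tmin..tmax}))"
    by (intro borel_measurable_times borel_measurable_const phi_meas)
  obtain R where R: "\<forall>z \<in> D \<times> {tmin..tmax}. \<bar>snd z - v \<bullet> fst z\<bar> \<le> R"
    using phi_bound[OF f(2)] by blast
  then have R': "\<forall>z \<in> D \<times> {tmin..tmax}. \<bar>\<sigma> * (snd z - v \<bullet> fst z)\<bar> \<le> R"
    using \<sigma> by (simp add: abs_mult)
  then show "\<exists>R. \<forall>z \<in> D \<times> {tmin..tmax}. \<bar>\<sigma> * (snd z - v \<bullet> fst z)\<bar> \<le> R" by blast
  have Osets: "D \<times> {tmin..tmax} \<in> sets lborel" by (rule Omega_sets[OF f(1)])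
  have Oleb: "D \<times> {tmin..tmax} \<in> sets lebesgue" using Osets by (rule sets_completionI_sets)
  have "emeasure lborel (D \<times> {tmin..tmax}) < \<infinity>"
    using f(2) by (intro emeasure_bounded_finite bounded_Times) auto
  then have Ofin: "emeasure lebesgue (D \<times> {tmin..tmax}) < \<infinity>" using Osets by (simp add: emeasure_completion)
  show "\<forall>\<epsilon>>0. \<exists>c>0. \<forall>\<tau>\<ge>0. c * exp (\<tau> * (B - \<epsilon>)) \<le>
           (LINT z|lebesgue_on (D \<times> {tmin..tmax}). exp (\<tau> * (\<sigma> * (snd z - v \<bullet> fst z))) * S (fst z) (snd z))"
    by (rule low_bound[OF Oleb Ofin int c0 m, where R=R]) (use R' opn in auto)
qed

lemma compare_B:
  fixes \<sigma> :: real
  assumes sa: "standing_assumptions D S tmin tmax" and sa': "standing_assumptions D' S' tmin tmax'"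
    and \<sigma>: "\<bar>\<sigma>\<bar> = 1"
    and up: "\<And>z. z \<in> D \<times> {tmin..tmax} \<Longrightarrow> \<sigma> * (snd z - v \<bullet> fst z) \<le> B"
    and opn: "\<And>\<epsilon>. \<epsilon> > 0 \<Longrightarrow> \<exists>U. open U \<and> U \<noteq> {} \<and> U \<subseteq> D \<times> {tmin..tmax} \<and> (\<forall>z\<in>U. B - \<epsilon> < \<sigma> * (snd z - v \<bullet> fst z))"
    and up': "\<And>z. z \<in> D' \<times> {tmin..tmax'} \<Longrightarrow> \<sigma> * (snd z - v \<bullet> fst z) \<le> B'"
    and opn': "\<And>\<epsilon>. \<epsilon> > 0 \<Longrightarrow> \<exists>U. open U \<and> U \<noteq> {} \<and> U \<subseteq> D' \<times> {tmin..tmax'} \<and> (\<forall>z\<in>U. B' - \<epsilon> < \<sigma> * (snd z - v \<bullet> fst z))"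
    and eq: "\<And>\<tau>. (LINT z|lebesgue_on (D \<times> {tmin..tmax}). exp (\<tau> * (\<sigma> * (snd z - v \<bullet> fst z))) * S (fst z) (snd z)) =
                 (LINT z|lebesgue_on (D' \<times> {tmin..tmax'}). exp (\<tau> * (\<sigma> * (snd z - v \<bullet> fst z))) * S' (fst z) (snd z))"
  shows "B = B'"
proof -
  note d = side_data[OF sa \<sigma> up opn]
  note d' = side_data[OF sa' \<sigma> up' opn']
  obtain R where R: "\<forall>z \<in> D \<times> {tmin..tmax}. \<bar>\<sigma> * (snd z - v \<bullet> fst z)\<bar> \<le> R" using d(4) by blast
  obtain R' where R': "\<forall>z \<in> D' \<times> {tmin..tmax'}. \<bar>\<sigma> * (snd z - v \<bullet> fst z)\<bar> \<le> R'" using d'(4) by blast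
  have "B' \<le> B"
    by (rule one_side[OF d(1,2,3), where R=R and L'="\<lambda>\<tau>. (LINT z|lebesgue_on (D' \<times> {tmin..tmax'}). exp (\<tau> * (\<sigma> * (snd z - v \<bullet> fst z))) * S' (fst z) (snd z))"])
       (use R up d'(5) eq in auto)
  moreover have "B \<le> B'"
    by (rule one_side[OF d'(1,2,3), where R=R' and L'="\<lambda>\<tau>. (LINT z|lebesgue_on (D \<times> {tmin..tmax}). exp (\<tau> * (\<sigma> * (snd z - v \<bullet> fst z))) * S (fst z) (snd z))"])
       (use R' up' d(5) eq in auto)
  ultimately show ?thesis by simp
qed

lemma dir:
  assumes sa: "standing_assumptions D S tmin tmax" and sa': "standing_assumptions D' S' tmin tmax'"
    and k: "kmin < kmax"
    and eq: "\<forall>k \<in> {kmin<..<kmax}. far_field D S tmin tmax v k = far_field D' S' tmin tmax' v k"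
  shows "tmax - Inf ((\<lambda>y. v \<bullet> y) ` D) = tmax' - Inf ((\<lambda>y. v \<bullet> y) ` D')"
    and "Sup ((\<lambda>y. v \<bullet> y) ` D) - tmin = Sup ((\<lambda>y. v \<bullet> y) ` D') - tmin"
proof -
  note tr = transfer[OF sa sa' k eq]
  show "tmax - Inf ((\<lambda>y. v \<bullet> y) ` D) = tmax' - Inf ((\<lambda>y. v \<bullet> y) ` D')"
    by (rule compare_B[OF sa sa', where \<sigma>=1 and v=v, OF _ geo_plus(1)[OF sa] geo_plus(2)[OF sa] geo_plus(1)[OF sa'] geo_plus(2)[OF sa']])
       (use tr in simp_all)
  show "Sup ((\<lambda>y. v \<bullet> y) ` D) - tmin = Sup ((\<lambda>y. v \<bullet> y) ` D') - tmin"
  proof (rule compare_B[OF sa sa', where \<sigma>="-1" and v=v, OF _ geo_minus(1)[OF sa] geo_minus(2)[OF sa] geo_minus(1)[OF sa'] geo_minus(2)[OF sa']])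
    fix \<tau> :: real
    show "(LINT z|lebesgue_on (D \<times> {tmin..tmax}). exp (\<tau> * (-1 * (snd z - v \<bullet> fst z))) * S (fst z) (snd z)) =
          (LINT z|lebesgue_on (D' \<times> {tmin..tmax'}). exp (\<tau> * (-1 * (snd z - v \<bullet> fst z))) * S' (fst z) (snd z))"
    proof -
      have e1: "(\<lambda>z. exp (\<tau> * (-1 * (snd z - v \<bullet> fst z))) * S (fst z) (snd z)) = (\<lambda>z. exp ((-\<tau>) * (snd z - v \<bullet> fst z)) * S (fst z) (snd z))"
        by (intro ext) (simp only: mult_minus1 mult_minus_right mult_minus_left mult_1_left)
      have e2: "(\<lambda>z. exp (\<tau> * (-1 * (snd z - v \<bullet> fst z))) * S' (fst z) (snd z)) = (\<lambda>z. exp ((-\<tau>) * (snd z - v \<bullet> fst z)) * S' (fst z) (snd z))"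
        by (intro ext) (simp only: mult_minus1 mult_minus_right mult_minus_left mult_1_left)
      show ?thesis unfolding e1 e2 by (rule tr)
    qed
  qed simp_all
qed


lemma Inf_neg_image:
  "Inf ((\<lambda>y. (- xh) \<bullet> y) ` D) = - Sup ((\<lambda>y::real^3. xh \<bullet> y) ` D)"
proof -
  have "uminus ` (\<lambda>y. (- xh) \<bullet> y) ` D = (\<lambda>y. xh \<bullet> y) ` D"
    by (auto simp: image_image inner_minus_left)
  then show ?thesis by (simp add: Inf_real_def)
qed

theorem theorem3p1:
  fixes D D' :: "(real^3) set" and S S' :: "real^3 \<Rightarrow> real \<Rightarrow> real"
    and tmin tmax tmax' kmin kmax :: real and xh :: "real^3"
  assumes "standing_assumptions D S tmin tmax"
    and "standing_assumptions D' S' tmin tmax'"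
    and "norm xh = 1"
    and "0 \<le> kmin" and "kmin < kmax"
    and "\<forall>k \<in> {kmin<..<kmax}. far_field D S tmin tmax xh k = far_field D' S' tmin tmax' xh k"
    and "\<forall>k \<in> {kmin<..<kmax}. far_field D S tmin tmax (- xh) k = far_field D' S' tmin tmax' (- xh) k"
  shows "K_strip D xh = K_strip D' xh \<and> tmax = tmax'"
proof -
  note p = dir[OF assms(1,2,5,6)]
  note m = dir[OF assms(1,2,5,7)]
  have b: "Sup ((\<lambda>y. xh \<bullet> y) ` D) = Sup ((\<lambda>y. xh \<bullet> y) ` D')" using p(2) by simp
  have "tmax + Sup ((\<lambda>y. xh \<bullet> y) ` D) = tmax' + Sup ((\<lambda>y. xh \<bullet> y) ` D')"
    using m(1) unfolding Inf_neg_image by simp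
  with b have t: "tmax = tmax'" by simp
  with p(1) have a: "Inf ((\<lambda>y. xh \<bullet> y) ` D) = Inf ((\<lambda>y. xh \<bullet> y) ` D')" by simp
  show ?thesis unfolding K_strip_def using a b t by simp
qed

end
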